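(* Let $\lambda,\mu>0$ and let $(X_1,\dots,X_n)$, $n\ge2$, have joint survival function $$\Pr(X_1>x_1,\dots,X_n>x_n)=\exp\Big\{-\frac{\lambda}{\mu}\Big(\sqrt{1+\tfrac{2\mu^2}{\lambda}\textstyle\sum_{j=1}^n x_j}-1\Big)\Big\},\quad x_j\ge0.$$ Then for each pair $i\neq j$, Kendall's tau of $(X_i,X_j)$ is $$\tau(X_i,X_j)=1-\frac{a(2+a)-4e^{2/a}\Gamma(0,2/a)}{2a^2},\qquad a=\frac{\mu}{\lambda},$$ where $\Gamma(0,z)=\int_z^\infty t^{-1}e^{-t}\,dt$. *)

theory Defs
  imports "HOL-Probability.Probability"
begin

text \<open>Kendall's tau of a pair of real random variables (X, Y) on M:
  with (X',Y') an independent copy, it is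
  P((X - X')(Y - Y') > 0) - P((X - X')(Y - Y') < 0).
  Here P is the joint law of (X, Y) and the independent copy is realised
  via the product measure P x P.\<close>
definition kendall_tau :: "'a measure \<Rightarrow> ('a \<Rightarrow> real) \<Rightarrow> ('a \<Rightarrow> real) \<Rightarrow> real" where
  "kendall_tau M X Y =
    (let P = distr M (borel :: (real \<times> real) measure) (\<lambda>\<omega>. (X \<omega>, Y \<omega>)) in
       measure (P \<Otimes>\<^sub>M P) {(p, q). (fst p - fst q) * (snd p - snd q) > 0}
     - measure (P \<Otimes>\<^sub>M P) {(p, q). (fst p - fst q) * (snd p - snd q) < 0})"

definition upper_gamma0 :: "real \<Rightarrow> real" where
  "upper_gamma0 z = (LBINT t:{z<..}. exp (- t) / t)"

end

theory Submission
  imports Defs "HOL-Real_Asymp.Real_Asymp"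
begin
locale ig = fixes lam mu :: real assumes lam: "lam > 0" and mu: "mu > 0"
begin
definition "k = 2 * mu^2 / lam"
definition "sq t = sqrt (1 + k * t)"
definition "psi t = exp (- (lam/mu) * (sq t - 1))"
definition "d1 t = - mu * psi t / sq t"
definition "d2 t = mu^2 * psi t / (sq t)^2 + mu * k * psi t / (2 * (sq t)^3)"

lemma k_pos: "k > 0" using lam mu by (simp add: k_def)
lemma sq_ge1: "t \<ge> 0 \<Longrightarrow> sq t \<ge> 1" using k_pos by (simp add: sq_def)
lemma sq_pos: "t \<ge> 0 \<Longrightarrow> sq t > 0" using sq_ge1[of t] by simp

lemma DERIV_sq: assumes "t \<ge> 0" shows "DERIV sq t :> k / (2 * sq t)"
proof -
  have "1 + k * t > 0" using k_pos assms by (simp add: add_pos_nonneg)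
  then show ?thesis unfolding sq_def
    by (auto intro!: derivative_eq_intros simp: field_simps)
qed

lemma DERIV_psi: assumes "t \<ge> 0" shows "DERIV psi t :> d1 t"
proof -
  have "DERIV psi t :> psi t * (- (lam/mu) * (k / (2 * sq t)))"
    unfolding psi_def[abs_def] using mu by (auto intro!: derivative_eq_intros DERIV_sq[OF assms] simp: field_simps)
  moreover have "psi t * (- (lam/mu) * (k / (2 * sq t))) = d1 t"
    using lam mu sq_pos[OF assms] by (simp add: d1_def k_def field_simps power2_eq_square)
  ultimately show ?thesis by simp
qed

lemma DERIV_d1: assumes "t \<ge> 0" shows "DERIV d1 t :> d2 t"
proof -
  have "DERIV d1 t :> ((- mu * d1 t) * sq t - (- mu * psi t) * (k / (2 * sq t))) / (sq t * sq t)"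
    unfolding d1_def[abs_def] using sq_pos[OF assms]
    by (auto intro!: derivative_eq_intros DERIV_sq[OF assms] DERIV_psi[OF assms, unfolded d1_def] simp: field_simps)
  moreover have "((- mu * d1 t) * sq t - (- mu * psi t) * (k / (2 * sq t))) / (sq t * sq t) = d2 t"
    using lam mu sq_pos[OF assms] by (simp add: d1_def d2_def field_simps power2_eq_square power3_eq_cube)
  ultimately show ?thesis by simp
qed

lemma psi_lim: "(psi \<longlongrightarrow> 0) at_top"
  using lam mu k_pos unfolding psi_def sq_def by real_asymp

lemma d1_lim: "(d1 \<longlongrightarrow> 0) at_top"
  using lam mu k_pos unfolding d1_def psi_def sq_def by real_asymp

end

context ig begin

lemma psi_nonneg: "psi t \<ge> 0" by (simp add: psi_def)
lemma psi_pos: "psi t > 0" by (simp add: psi_def)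
lemma psi0: "psi 0 = 1" by (simp add: psi_def sq_def)
lemma d1_nonpos: "t \<ge> 0 \<Longrightarrow> d1 t \<le> 0"
  using sq_pos[of t] mu psi_pos[of t] by (simp add: d1_def)
lemma d2_nonneg: "t \<ge> 0 \<Longrightarrow> d2 t \<ge> 0"
  using sq_pos[of t] mu psi_pos[of t] k_pos by (simp add: d2_def)

lemma meas_sq[measurable]: "sq \<in> borel_measurable borel"
  unfolding sq_def[abs_def] by measurable
lemma meas_psi[measurable]: "psi \<in> borel_measurable borel"
  unfolding psi_def[abs_def] by measurable
lemma meas_d1[measurable]: "d1 \<in> borel_measurable borel"
  unfolding d1_def[abs_def] by measurable
lemma meas_d2[measurable]: "d2 \<in> borel_measurable borel"
  unfolding d2_def[abs_def] by measurable

lemma shift_lim: "((\<lambda>y. f (x + y)) \<longlongrightarrow> (0::real)) at_top" if "(f \<longlongrightarrow> 0) at_top" for f :: "real \<Rightarrow> real"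
proof -
  have "filterlim (\<lambda>y. x + y) at_top at_top"
    by (rule filterlim_tendsto_add_at_top[OF tendsto_const filterlim_ident])
  then show ?thesis using that by (rule filterlim_compose[rotated])
qed

lemma inner_FTC:
  assumes "x \<ge> 0" "b \<ge> 0"
  shows "(\<integral>\<^sup>+y. ennreal (d2 (x + y)) * indicator {b..} y \<partial>lborel) = ennreal (- d1 (x + b))"
proof -
  have "(\<integral>\<^sup>+y. ennreal (d2 (x + y)) * indicator {b..} y \<partial>lborel) = 0 - d1 (x + b)"
  proof (rule nn_integral_FTC_atLeast[where F = "\<lambda>y. d1 (x + y)"])
    fix y assume "b \<le> y"
    then have "x + y \<ge> 0" using assms by simp
    have "DERIV (\<lambda>y. d1 (x + y)) y :> d2 (x + y) * 1"
      by (rule DERIV_chain2[where g="\<lambda>y. x + y" and x=y, OF DERIV_d1[OF \<open>x + y \<ge> 0\<close>]])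
        (auto intro!: derivative_eq_intros)
    then show "DERIV (\<lambda>y. d1 (x + y)) y :> d2 (x + y)" by simp
    show "0 \<le> d2 (x + y)" using \<open>x + y \<ge> 0\<close> by (rule d2_nonneg)
  next
    show "((\<lambda>y. d1 (x + y)) \<longlongrightarrow> 0) at_top" by (rule shift_lim[OF d1_lim])
  qed measurable
  then show ?thesis by simp
qed

lemma outer_FTC:
  assumes "a \<ge> 0" "b \<ge> 0"
  shows "(\<integral>\<^sup>+x. ennreal (- d1 (x + b)) * indicator {a..} x \<partial>lborel) = ennreal (psi (a + b))"
proof -
  have "(\<integral>\<^sup>+x. ennreal (- d1 (x + b)) * indicator {a..} x \<partial>lborel) = 0 - (- psi (a + b))"
  proof (rule nn_integral_FTC_atLeast[where F = "\<lambda>x. - psi (x + b)"])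
    fix x assume "a \<le> x"
    then have "x + b \<ge> 0" using assms by simp
    have "DERIV (\<lambda>x. psi (x + b)) x :> d1 (x + b) * 1"
      by (rule DERIV_chain2[where g="\<lambda>x. x + b" and x=x, OF DERIV_psi[OF \<open>x + b \<ge> 0\<close>]])
        (auto intro!: derivative_eq_intros)
    then show "DERIV (\<lambda>x. - psi (x + b)) x :> - d1 (x + b)"
      using DERIV_minus by fastforce
    show "0 \<le> - d1 (x + b)" using d1_nonpos[OF \<open>x + b \<ge> 0\<close>] by simp
  next
    show "((\<lambda>x. - psi (x + b)) \<longlongrightarrow> 0) at_top"
      using tendsto_minus[OF shift_lim[OF psi_lim, of b]] by (simp add: add.commute)
  qed measurable
  then show ?thesis by simp
qed

lemma half_FTC:
  "(\<integral>\<^sup>+x. ennreal (psi x * - d1 x) * indicator {0..} x \<partial>lborel) = ennreal (1/2)"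
proof -
  have "(\<integral>\<^sup>+x. ennreal (psi x * - d1 x) * indicator {0..} x \<partial>lborel) = 0 - (- psi 0 * psi 0 / 2)"
  proof (rule nn_integral_FTC_atLeast[where F = "\<lambda>x. - psi x * psi x / 2"])
    fix x :: real assume "0 \<le> x"
    then show "DERIV (\<lambda>x. - psi x * psi x / 2) x :> psi x * - d1 x"
      by (auto intro!: derivative_eq_intros DERIV_psi)
    show "0 \<le> psi x * - d1 x" using d1_nonpos[OF \<open>0 \<le> x\<close>] psi_nonneg[of x]
      by (simp add: mult_nonneg_nonpos)
  next
    show "((\<lambda>x. - psi x * psi x / 2) \<longlongrightarrow> 0) at_top"
      using tendsto_divide[OF tendsto_minus[OF tendsto_power[OF psi_lim, of 2]] tendsto_const, of 2] by (simp add: power2_eq_square)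
  qed measurable
  then show ?thesis by (simp add: psi0)
qed

end

lemma ennreal_mult_ind: "ennreal (r * indicator A x) = ennreal r * indicator A x"
  by (simp add: ennreal_mult'' ennreal_indicator)

lemma nn_integral_atLeast_SUP:
  fixes u :: "real \<Rightarrow> ennreal" and b :: "nat \<Rightarrow> real"
  assumes [measurable]: "u \<in> borel_measurable borel" and inc: "incseq b"
    and lim: "filterlim b at_top sequentially"
  shows "(\<integral>\<^sup>+x. u x * indicator {c..} x \<partial>lborel) = (SUP n. \<integral>\<^sup>+x. u x * indicator {c..b n} x \<partial>lborel)"
proof -
  have "(\<integral>\<^sup>+x. u x * indicator {c..} x \<partial>lborel) = (\<integral>\<^sup>+x. (SUP n. u x * indicator {c..b n} x) \<partial>lborel)"
  proof (rule nn_integral_cong)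
    fix x
    show "u x * indicator {c..} x = (SUP n. u x * indicator {c..b n} x)"
    proof (cases "c \<le> x")
      case True
      from lim have "eventually (\<lambda>n. x \<le> b n) sequentially"
        by (simp add: filterlim_at_top)
      then obtain N where N: "x \<le> b N" by (auto simp: eventually_sequentially)
      show ?thesis
      proof (rule antisym)
        have "u x * indicator {c..} x = u x * indicator {c..b N} x"
          using True N by (simp add: indicator_def)
        also have "\<dots> \<le> (SUP n. u x * indicator {c..b n} x)" by (rule SUP_upper) simp
        finally show "u x * indicator {c..} x \<le> (SUP n. u x * indicator {c..b n} x)" .
        show "(SUP n. u x * indicator {c..b n} x) \<le> u x * indicator {c..} x"
          by (rule SUP_least) (auto intro!: mult_left_mono simp: indicator_def)
      qed
    next
      case False
      then show ?thesis by (simp add: indicator_def)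
    qed
  qed
  also have "\<dots> = (SUP n. \<integral>\<^sup>+x. u x * indicator {c..b n} x \<partial>lborel)"
  proof (rule nn_integral_monotone_convergence_SUP)
    show "incseq (\<lambda>n x. u x * indicator {c..b n} x)"
      unfolding incseq_def le_fun_def
    proof (intro allI impI)
      fix m n :: nat and x :: real assume "m \<le> n"
      then have "b m \<le> b n" using inc by (simp add: incseq_def)
      then have "indicator {c..b m} x \<le> (indicator {c..b n} x :: ennreal)" by auto
      then show "u x * indicator {c..b m} x \<le> u x * indicator {c..b n} x" by (rule mult_left_mono) simp
    qed
  qed measurable
  finally show ?thesis .
qed

lemma nn_integral_substitution_atLeast:
  fixes f g g' :: "real \<Rightarrow> real"
  assumes [measurable]: "f \<in> borel_measurable borel" "g \<in> borel_measurable borel" "g' \<in> borel_measurable borel"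
    and derivg: "\<And>x. x \<ge> a \<Longrightarrow> (g has_real_derivative g' x) (at x)"
    and contg': "continuous_on {a..} g'"
    and nonneg: "\<And>x. x \<ge> a \<Longrightarrow> g' x \<ge> 0"
    and lim: "filterlim g at_top at_top"
  shows "(\<integral>\<^sup>+x. ennreal (f x) * indicator {g a..} x \<partial>lborel)
       = (\<integral>\<^sup>+x. ennreal (f (g x) * g' x) * indicator {a..} x \<partial>lborel)"
proof -
  have mono: "g x \<le> g y" if "a \<le> x" "x \<le> y" for x y
    using derivg nonneg that
    by (intro DERIV_nonneg_imp_nondecreasing[of x y g]) (auto intro: order_trans)
  have lin: "filterlim (\<lambda>n. a + real n) at_top sequentially"
    by (rule filterlim_tendsto_add_at_top[OF tendsto_const filterlim_real_sequentially])
  have eq_n: "(\<integral>\<^sup>+x. ennreal (f x) * indicator {g a..g (a + real n)} x \<partial>lborel)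
      = (\<integral>\<^sup>+x. ennreal (f (g x) * g' x) * indicator {a..a + real n} x \<partial>lborel)" for n
    using nn_integral_substitution[where f=f and g=g and a=a and b="a + real n" and g'=g'] derivg nonneg
      continuous_on_subset[OF contg', of "{a..a + real n}"]
    by (auto simp: ennreal_mult_ind set_borel_measurable_def)
  have "(\<integral>\<^sup>+x. ennreal (f x) * indicator {g a..} x \<partial>lborel)
      = (SUP n. \<integral>\<^sup>+x. ennreal (f x) * indicator {g a..g (a + real n)} x \<partial>lborel)"
  proof (rule nn_integral_atLeast_SUP)
    show "incseq (\<lambda>n. g (a + real n))" by (auto simp: incseq_def intro!: mono)
    show "filterlim (\<lambda>n. g (a + real n)) at_top sequentially"
      by (rule filterlim_compose[OF lim lin])
  qed measurable
  also have "\<dots> = (SUP n. \<integral>\<^sup>+x. ennreal (f (g x) * g' x) * indicator {a..a + real n} x \<partial>lborel)"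
    using eq_n by simp
  also have "\<dots> = (\<integral>\<^sup>+x. ennreal (f (g x) * g' x) * indicator {a..} x \<partial>lborel)"
    by (rule nn_integral_atLeast_SUP[symmetric]) (auto simp: incseq_def intro: lin)
  finally show ?thesis .
qed

lemma gamma_part:
  fixes w :: real assumes w: "w > 0"
  shows "(\<integral>\<^sup>+s. ennreal (exp (- w * s) / s) * indicator {1..} s \<partial>lborel) = ennreal (upper_gamma0 w)"
proof -
  define E where "E = (\<integral>\<^sup>+u. ennreal (exp (- u) / u) * indicator {w..} u \<partial>lborel)"
  have "E = ennreal \<bar>w\<bar> * (\<integral>\<^sup>+s. ennreal (exp (- (0 + w * s)) / (0 + w * s)) * indicator {w..} (0 + w * s) \<partial>lborel)"
    unfolding E_def using w
    by (intro nn_integral_real_affine[where c=w and t=0 and f="\<lambda>u. ennreal (exp (- u) / u) * indicator {w..} u"]) auto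
  also have "\<dots> = (\<integral>\<^sup>+s. ennreal w * (ennreal (exp (- (0 + w * s)) / (0 + w * s)) * indicator {w..} (0 + w * s)) \<partial>lborel)"
    using w by (subst nn_integral_cmult) auto
  also have "\<dots> = (\<integral>\<^sup>+s. ennreal (exp (- w * s) / s) * indicator {1..} s \<partial>lborel)"
  proof (rule nn_integral_cong)
    fix s :: real
    have "w \<le> w * s \<longleftrightarrow> 1 \<le> s" using w by simp
    moreover have "1 \<le> s \<Longrightarrow> ennreal w * ennreal (exp (- (w * s)) / (w * s)) = ennreal (exp (- w * s) / s)"
      using w by (subst ennreal_mult[symmetric]) auto
    ultimately show "ennreal w * (ennreal (exp (- (0 + w * s)) / (0 + w * s)) * indicator {w..} (0 + w * s)) =
         ennreal (exp (- w * s) / s) * indicator {1..} s"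
      by (auto simp: indicator_def)
  qed
  finally have E1: "E = (\<integral>\<^sup>+s. ennreal (exp (- w * s) / s) * indicator {1..} s \<partial>lborel)" .
  have "E \<le> (\<integral>\<^sup>+u. ennreal (exp (- u) / w) * indicator {w..} u \<partial>lborel)"
    unfolding E_def
    by (intro nn_integral_mono) (auto simp: indicator_def w frac_le intro!: ennreal_leI)
  also have "\<dots> = 0 - (- exp (- w) / w)"
  proof (rule nn_integral_FTC_atLeast[where F = "\<lambda>u. - exp (- u) / w"])
    fix x :: real assume "w \<le> x"
    show "DERIV (\<lambda>u. - exp (- u) / w) x :> exp (- x) / w"
      using w by (auto intro!: derivative_eq_intros)
    show "0 \<le> exp (- x) / w" using w by simp
  next
    show "((\<lambda>u. - exp (- u) / w) \<longlongrightarrow> 0) at_top" using w by real_asymp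
  qed measurable
  finally have Efin: "E < \<infinity>" by (auto simp: top_unique less_top[symmetric])
  have "upper_gamma0 w = integral\<^sup>L lborel (\<lambda>u. indicator {w<..} u *\<^sub>R (exp (- u) / u))"
    by (simp add: upper_gamma0_def set_lebesgue_integral_def)
  also have "\<dots> = enn2real (\<integral>\<^sup>+u. ennreal (indicator {w<..} u *\<^sub>R (exp (- u) / u)) \<partial>lborel)"
    using w by (intro integral_eq_nn_integral AE_I2) (auto simp: indicator_def)
  also have "(\<integral>\<^sup>+u. ennreal (indicator {w<..} u *\<^sub>R (exp (- u) / u)) \<partial>lborel) = E"
    unfolding E_def
    by (intro nn_integral_cong_AE, use AE_lborel_singleton[of w] in eventually_elim)
       (auto simp: indicator_def)
  finally have "upper_gamma0 w = enn2real E" .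
  then show ?thesis using E1 Efin by (simp add: less_top)
qed

lemma alg1: fixes E z q lam mu :: real assumes "z > 0" "q > 0" "mu^2 = lam*q/2"
  shows "((z^2-1)/q) * (E * (mu^2 * E / z^2 + mu * q * E / (2 * z^3))) * (2*z/q) = (lam*z + mu - lam/z - mu/z^2) * (E*E) / q"
proof -
  have "((z^2-1)/q) * (E * (mu^2 * E / z^2 + mu * q * E / (2 * z^3))) * (2*z/q)
      = (z^2-1) * E * E * (2 * mu^2 / z + mu * q / z^2) / q^2"
    using assms by (simp add: field_simps power2_eq_square power3_eq_cube)
  also have "\<dots> = (z^2-1) * E * E * (lam * q / z + mu * q / z^2) / q^2"
    using assms(3) by simp
  also have "\<dots> = (lam*z + mu - lam/z - mu/z^2) * (E*E) / q"
    using assms by (simp add: field_simps power2_eq_square power3_eq_cube)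
  finally show ?thesis .
qed

context ig begin

definition "w = 2 * lam / mu"
definition "hh s = (lam * s + mu - lam / s - mu / s^2) * exp (- w * (s - 1)) / k"
definition "p3 s = exp (- w * s) * (lam * s + mu + lam - 2 * lam / s - mu / s^2)"
definition "Phi3 s = - exp (- w * s) * ((lam * s + mu) / w + lam / w^2 + lam / w - mu / s)"

lemma w_pos: "w > 0" using lam mu by (simp add: w_def)

lemma J_subst:
  "(\<integral>\<^sup>+t. ennreal (t * (psi t * d2 t)) * indicator {0..} t \<partial>lborel)
     = (\<integral>\<^sup>+s. ennreal (hh s) * indicator {1..} s \<partial>lborel)"
proof -
  let ?g = "\<lambda>s::real. (s^2 - 1) / k"
  let ?g' = "\<lambda>s::real. 2 * s / k"
  have "(\<integral>\<^sup>+t. ennreal (t * (psi t * d2 t)) * indicator {?g 1..} t \<partial>lborel)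
     = (\<integral>\<^sup>+s. ennreal ((?g s) * (psi (?g s) * d2 (?g s)) * ?g' s) * indicator {1..} s \<partial>lborel)"
  proof (rule nn_integral_substitution_atLeast[where f = "\<lambda>t. t * (psi t * d2 t)"])
    fix x :: real assume "1 \<le> x"
    show "DERIV ?g x :> ?g' x" using k_pos by (auto intro!: derivative_eq_intros)
    show "0 \<le> ?g' x" using k_pos \<open>1 \<le> x\<close> by simp
  next
    show "continuous_on {1..} ?g'" using k_pos by (intro continuous_intros) auto
    show "filterlim ?g at_top at_top" using k_pos by real_asymp
  qed measurable
  also have "\<dots> = (\<integral>\<^sup>+s. ennreal (hh s) * indicator {1..} s \<partial>lborel)"
  proof (rule nn_integral_cong)
    fix s :: real
    show "ennreal ((?g s) * (psi (?g s) * d2 (?g s)) * ?g' s) * indicator {1..} s = ennreal (hh s) * indicator {1..} s"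
    proof (cases "1 \<le> s")
      case True
      have sq: "sq (?g s) = s" using k_pos True by (simp add: sq_def)
      have e2: "exp (- w * (s - 1)) = exp (- (lam / mu) * (s - 1)) * exp (- (lam / mu) * (s - 1))"
      proof -
        have "- w * (s - 1) = - (lam / mu) * (s - 1) + - (lam / mu) * (s - 1)"
          using mu by (simp add: w_def field_simps)
        then show ?thesis by (simp only: exp_add)
      qed
      have ps: "psi (?g s) = exp (- (lam / mu) * (s - 1))" by (simp add: psi_def sq)
      have kk: "mu^2 = lam * k / 2" using lam by (simp add: k_def)
      have "(?g s) * (psi (?g s) * d2 (?g s)) * ?g' s = hh s"
        unfolding d2_def sq hh_def ps e2 using True k_pos
        by (intro alg1 kk) auto
      then show ?thesis by simp
    qed simp
  qed
  finally show ?thesis by simp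
qed

end

lemma gamma_nonneg: "upper_gamma0 w \<ge> 0" if "w > 0" for w :: real
  unfolding upper_gamma0_def set_lebesgue_integral_def using that
  by (intro integral_nonneg_AE AE_I2) (auto simp: indicator_def)

context ig begin

lemma hh_nonneg: "s \<ge> 1 \<Longrightarrow> hh s \<ge> 0"
proof -
  assume s: "s \<ge> 1"
  have "lam / s \<le> lam * s" using s lam
  proof -
    have "lam \<le> lam * s" using s lam by simp
    moreover have "lam / s \<le> lam" using s lam by (simp add: divide_le_eq)
    ultimately show ?thesis by linarith
  qed
  moreover have "mu / s^2 \<le> mu" using s mu
    by (simp add: divide_le_eq one_le_power mult_le_cancel_left1)
  ultimately have "lam * s + mu - lam / s - mu / s^2 \<ge> 0" by simp
  then show ?thesis unfolding hh_def using k_pos by simp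
qed

lemma p3_nonneg: "s \<ge> 1 \<Longrightarrow> p3 s \<ge> 0"
proof -
  assume s: "s \<ge> 1"
  have "lam / s \<le> lam" using s lam by (simp add: divide_le_eq mult_le_cancel_left1)
  moreover have "lam / s \<le> lam * s" using s lam
  proof -
    have "lam \<le> lam * s" using s lam by simp
    moreover have "lam / s \<le> lam" using s lam by (simp add: divide_le_eq)
    ultimately show ?thesis by linarith
  qed
  moreover have "mu / s^2 \<le> mu" using s mu
    by (simp add: divide_le_eq one_le_power mult_le_cancel_left1)
  ultimately have "lam * s + mu + lam - 2 * lam / s - mu / s^2 \<ge> 0" by simp
  then show ?thesis unfolding p3_def by simp
qed

lemma pointwise_split: "s \<ge> 1 \<Longrightarrow> hh s * (k * exp (- w)) + lam * exp (- w * s) = p3 s + lam * (exp (- w * s) / s)"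
proof -
  assume s: "s \<ge> 1"
  have e: "exp (- w * (s - 1)) * exp (- w) = exp (- w * s)"
    by (simp add: exp_add[symmetric] algebra_simps)
  have "hh s * (k * exp (- w)) = (lam * s + mu - lam / s - mu / s^2) * (exp (- w * (s - 1)) * exp (- w))"
    unfolding hh_def using k_pos by simp
  also have "\<dots> = (lam * s + mu - lam / s - mu / s^2) * exp (- w * s)" by (simp only: e)
  finally show ?thesis unfolding p3_def using s by (simp add: field_simps)
qed

lemma DERIV_Phi3: "s \<ge> 1 \<Longrightarrow> DERIV Phi3 s :> p3 s"
proof -
  assume s: "s \<ge> 1"
  have mw: "mu * w = 2 * lam" using mu by (simp add: w_def)
  have "DERIV Phi3 s :> exp (- w * s) * (w * ((lam * s + mu) / w + lam / w^2 + lam / w - mu / s) - (lam / w + mu / s^2))"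
    unfolding Phi3_def[abs_def] using s w_pos
    by (auto intro!: derivative_eq_intros simp: field_simps power2_eq_square)
  moreover have "w * ((lam * s + mu) / w + lam / w^2 + lam / w - mu / s) - (lam / w + mu / s^2)
     = lam * s + mu + lam - 2 * lam / s - mu / s^2"
  proof -
    have "w * ((lam * s + mu) / w + lam / w^2 + lam / w - mu / s) - (lam / w + mu / s^2)
       = lam * s + mu + lam - mu * w / s - mu / s^2"
      using w_pos s by (simp add: field_simps power2_eq_square)
    then show ?thesis by (simp add: mw)
  qed
  ultimately show ?thesis unfolding p3_def by simp
qed

lemma Phi3_1: "- Phi3 1 = 3 * mu^2 / (4 * lam) * exp (- w)"
  using lam mu unfolding Phi3_def w_def by (simp add: field_simps power2_eq_square)

lemma Phi3_lim: "(Phi3 \<longlongrightarrow> 0) at_top"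
  unfolding Phi3_def using w_pos by real_asymp

end

context ig begin

lemma meas_hh[measurable]: "hh \<in> borel_measurable borel" unfolding hh_def[abs_def] by measurable
lemma meas_p3[measurable]: "p3 \<in> borel_measurable borel" unfolding p3_def[abs_def] by measurable

lemma J_val:
  "(\<integral>\<^sup>+t. ennreal (t * (psi t * d2 t)) * indicator {0..} t \<partial>lborel)
     = ennreal (((lam + mu) / w + lam / w^2 - mu + lam * exp w * upper_gamma0 w) / k)
   \<and> ((lam + mu) / w + lam / w^2 - mu + lam * exp w * upper_gamma0 w) / k \<ge> 0"
proof -
  define J where "J = (\<integral>\<^sup>+s. ennreal (hh s) * indicator {1..} s \<partial>lborel)"
  define c where "c = k * exp (- w)"
  have c_pos: "c > 0" using k_pos by (simp add: c_def)
  define G where "G = upper_gamma0 w"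
  have G_nn: "G \<ge> 0" unfolding G_def using w_pos by (rule gamma_nonneg)
  have A: "(\<integral>\<^sup>+s. ennreal (lam * exp (- w * s)) * indicator {1..} s \<partial>lborel) = ennreal (lam * exp (- w) / w)"
  proof -
    have "(\<integral>\<^sup>+s. ennreal (lam * exp (- w * s)) * indicator {1..} s \<partial>lborel) = 0 - (- lam * exp (- w * 1) / w)"
    proof (rule nn_integral_FTC_atLeast[where F = "\<lambda>s. - lam * exp (- w * s) / w"])
      fix x :: real
      show "DERIV (\<lambda>s. - lam * exp (- w * s) / w) x :> lam * exp (- w * x)"
        using w_pos by (auto intro!: derivative_eq_intros)
      show "0 \<le> lam * exp (- w * x)" using lam by simp
    next
      show "((\<lambda>s. - lam * exp (- w * s) / w) \<longlongrightarrow> 0) at_top" using w_pos by real_asymp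
    qed measurable
    then show ?thesis by simp
  qed
  have B: "(\<integral>\<^sup>+s. ennreal (p3 s) * indicator {1..} s \<partial>lborel) = ennreal (- Phi3 1)"
  proof -
    have "(\<integral>\<^sup>+s. ennreal (p3 s) * indicator {1..} s \<partial>lborel) = 0 - Phi3 1"
    proof (rule nn_integral_FTC_atLeast[where F = Phi3])
      fix x :: real assume "1 \<le> x"
      then show "DERIV Phi3 x :> p3 x" by (rule DERIV_Phi3)
      show "0 \<le> p3 x" using \<open>1 \<le> x\<close> by (rule p3_nonneg)
    next
      show "(Phi3 \<longlongrightarrow> 0) at_top" by (rule Phi3_lim)
    qed measurable
    then show ?thesis by simp
  qed
  have C: "(\<integral>\<^sup>+s. ennreal (lam * (exp (- w * s) / s)) * indicator {1..} s \<partial>lborel) = ennreal lam * ennreal G"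
  proof -
    have "(\<integral>\<^sup>+s. ennreal (lam * (exp (- w * s) / s)) * indicator {1..} s \<partial>lborel)
        = (\<integral>\<^sup>+s. ennreal lam * (ennreal (exp (- w * s) / s) * indicator {1..} s) \<partial>lborel)"
    proof (intro nn_integral_cong)
      fix x :: real
      show "ennreal (lam * (exp (- w * x) / x)) * indicator {1..} x
          = ennreal lam * (ennreal (exp (- w * x) / x) * indicator {1..} x)"
      proof (cases "1 \<le> x")
        case True
        have "ennreal (lam * (exp (- w * x) / x)) = ennreal lam * ennreal (exp (- w * x) / x)"
          using lam True by (intro ennreal_mult) auto
        then show ?thesis using True by simp
      qed simp
    qed
    also have "\<dots> = ennreal lam * (\<integral>\<^sup>+s. ennreal (exp (- w * s) / s) * indicator {1..} s \<partial>lborel)"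
      by (rule nn_integral_cmult) measurable
    also have "\<dots> = ennreal lam * ennreal G" unfolding G_def by (simp only: gamma_part[OF w_pos])
    finally show ?thesis .
  qed
  have D: "(\<integral>\<^sup>+s. ennreal (hh s * c) * indicator {1..} s \<partial>lborel) = J * ennreal c"
  proof -
    have "(\<integral>\<^sup>+s. ennreal (hh s * c) * indicator {1..} s \<partial>lborel)
        = (\<integral>\<^sup>+s. (ennreal (hh s) * indicator {1..} s) * ennreal c \<partial>lborel)"
    proof (intro nn_integral_cong)
      fix s :: real
      have "ennreal (hh s * c) = ennreal (hh s) * ennreal c" using c_pos by (intro ennreal_mult'') simp
      then show "ennreal (hh s * c) * indicator {1..} s = ennreal (hh s) * indicator {1..} s * ennreal c"
        by (simp only: mult_ac)
    qed
    also have "\<dots> = J * ennreal c" unfolding J_def by (rule nn_integral_multc) measurable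
    finally show ?thesis .
  qed
  have "(\<integral>\<^sup>+s. (ennreal (hh s * c) + ennreal (lam * exp (- w * s))) * indicator {1..} s \<partial>lborel)
      = (\<integral>\<^sup>+s. (ennreal (p3 s) + ennreal (lam * (exp (- w * s) / s))) * indicator {1..} s \<partial>lborel)"
  proof (rule nn_integral_cong)
    fix s :: real
    show "(ennreal (hh s * c) + ennreal (lam * exp (- w * s))) * indicator {1..} s
        = (ennreal (p3 s) + ennreal (lam * (exp (- w * s) / s))) * indicator {1..} s"
    proof (cases "1 \<le> s")
      case True
      have "ennreal (hh s * c) + ennreal (lam * exp (- w * s)) = ennreal (hh s * c + lam * exp (- w * s))"
        using hh_nonneg[OF True] c_pos lam by (intro ennreal_plus[symmetric]) auto
      also have "\<dots> = ennreal (p3 s + lam * (exp (- w * s) / s))"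
        using pointwise_split[OF True] by (simp add: c_def)
      also have "\<dots> = ennreal (p3 s) + ennreal (lam * (exp (- w * s) / s))"
        using p3_nonneg[OF True] lam True by (intro ennreal_plus) auto
      finally show ?thesis by simp
    qed simp
  qed
  moreover have s1: "(\<integral>\<^sup>+s. (ennreal (hh s * c) + ennreal (lam * exp (- w * s))) * indicator {1..} s \<partial>lborel)
     = (\<integral>\<^sup>+s. ennreal (hh s * c) * indicator {1..} s \<partial>lborel) + (\<integral>\<^sup>+s. ennreal (lam * exp (- w * s)) * indicator {1..} s \<partial>lborel)"
    unfolding distrib_right by (rule nn_integral_add) measurable
  moreover have s2: "(\<integral>\<^sup>+s. (ennreal (p3 s) + ennreal (lam * (exp (- w * s) / s))) * indicator {1..} s \<partial>lborel)
     = (\<integral>\<^sup>+s. ennreal (p3 s) * indicator {1..} s \<partial>lborel) + (\<integral>\<^sup>+s. ennreal (lam * (exp (- w * s) / s)) * indicator {1..} s \<partial>lborel)"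
    unfolding distrib_right by (rule nn_integral_add) measurable
  ultimately have "J * ennreal c + ennreal (lam * exp (- w) / w) = ennreal (- Phi3 1) + ennreal lam * ennreal G"
    by (simp only: A B C D)
  also have "\<dots> = ennreal (- Phi3 1 + lam * G)"
    using Phi3_1 lam G_nn mu by (simp add: ennreal_plus ennreal_mult)
  finally have eq: "J * ennreal c + ennreal (lam * exp (- w) / w) = ennreal (- Phi3 1 + lam * G)" .
  have "J * ennreal c \<noteq> \<infinity>"
  proof
    assume "J * ennreal c = \<infinity>"
    then show False using eq by simp
  qed
  then have "J \<noteq> \<infinity>" using c_pos by (auto simp: ennreal_mult_eq_top_iff)
  then obtain Jr where Jr: "J = ennreal Jr" "Jr \<ge> 0" by (cases J) auto
  have "ennreal (Jr * c + lam * exp (- w) / w) = ennreal (- Phi3 1 + lam * G)"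
    using eq Jr c_pos lam w_pos by (simp add: ennreal_plus ennreal_mult)
  then have "Jr * c + lam * exp (- w) / w = - Phi3 1 + lam * G"
    using Jr c_pos lam w_pos G_nn Phi3_1 mu by (subst (asm) ennreal_inj) auto
  then have "Jr = ((lam + mu) / w + lam / w^2 - mu + lam * exp w * G) / k"
  proof -
    assume e: "Jr * c + lam * exp (- w) / w = - Phi3 1 + lam * G"
    define E where "E = exp w"
    have E: "E > 0" "exp (- w) = 1 / E" unfolding E_def by (auto simp: exp_minus field_simps)
    have "Jr = (3 * mu^2 / (4 * lam) + lam * G * E - lam / w) / k"
      using e E k_pos w_pos unfolding Phi3_1 c_def by (simp add: field_simps)
    also have "\<dots> = ((lam + mu) / w + lam / w^2 - mu + lam * E * G) / k"
      using lam mu k_pos unfolding w_def by (simp add: field_simps power2_eq_square)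
    finally show ?thesis by (simp add: E_def)
  qed
  then show ?thesis using J_subst Jr by (simp add: J_def G_def)
qed

end

lemma Ioi_atLeast_nn:
  "(\<integral>\<^sup>+y. u y * indicator {b<..} y \<partial>lborel) = (\<integral>\<^sup>+y. u y * indicator {b..} y \<partial>lborel)"
  for u :: "real \<Rightarrow> ennreal" and b :: real
  by (intro nn_integral_cong_AE, use AE_lborel_singleton[of b] in eventually_elim)
     (auto simp: indicator_def)

context ig begin

definition f2 :: "real \<times> real \<Rightarrow> ennreal" where
  "f2 p = ennreal (d2 (fst p + snd p)) * indicator ({0<..} \<times> {0<..}) p"

lemma meas_f2[measurable]: "f2 \<in> borel_measurable (lborel \<Otimes>\<^sub>M lborel)"
  unfolding f2_def[abs_def] by measurable

lemma rect_inner: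
  assumes "x \<ge> 0" "b \<ge> 0"
  shows "(\<integral>\<^sup>+y. ennreal (d2 (x + y)) * indicator {b<..} y \<partial>lborel) = ennreal (- d1 (x + b))"
  using inner_FTC[OF assms] by (simp add: Ioi_atLeast_nn)

lemma rect_Q:
  assumes a: "a \<ge> 0" and b: "b \<ge> 0"
  shows "(\<integral>\<^sup>+p. f2 p * indicator ({a<..} \<times> {b<..}) p \<partial>(lborel \<Otimes>\<^sub>M lborel)) = ennreal (psi (a + b))"
proof -
  have "(\<integral>\<^sup>+p. f2 p * indicator ({a<..} \<times> {b<..}) p \<partial>(lborel \<Otimes>\<^sub>M lborel))
      = (\<integral>\<^sup>+x. \<integral>\<^sup>+y. f2 (x, y) * indicator ({a<..} \<times> {b<..}) (x, y) \<partial>lborel \<partial>lborel)"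
    by (rule lborel.nn_integral_fst[symmetric]) measurable
  also have "\<dots> = (\<integral>\<^sup>+x. indicator {a<..} x * (\<integral>\<^sup>+y. ennreal (d2 (x + y)) * indicator {b<..} y \<partial>lborel) \<partial>lborel)"
  proof (intro nn_integral_cong)
    fix x :: real
    have "(\<integral>\<^sup>+y. f2 (x, y) * indicator ({a<..} \<times> {b<..}) (x, y) \<partial>lborel)
        = (\<integral>\<^sup>+y. indicator {a<..} x * (ennreal (d2 (x + y)) * indicator {b<..} y) \<partial>lborel)"
      using a b by (intro nn_integral_cong) (auto simp: f2_def indicator_def)
    also have "\<dots> = indicator {a<..} x * (\<integral>\<^sup>+y. ennreal (d2 (x + y)) * indicator {b<..} y \<partial>lborel)"
      by (rule nn_integral_cmult) measurable
    finally show "(\<integral>\<^sup>+y. f2 (x, y) * indicator ({a<..} \<times> {b<..}) (x, y) \<partial>lborel)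
        = indicator {a<..} x * (\<integral>\<^sup>+y. ennreal (d2 (x + y)) * indicator {b<..} y \<partial>lborel)" .
  qed
  also have "\<dots> = (\<integral>\<^sup>+x. ennreal (- d1 (x + b)) * indicator {a<..} x \<partial>lborel)"
  proof (intro nn_integral_cong)
    fix x :: real
    show "indicator {a<..} x * (\<integral>\<^sup>+y. ennreal (d2 (x + y)) * indicator {b<..} y \<partial>lborel)
        = ennreal (- d1 (x + b)) * indicator {a<..} x"
    proof (cases "a < x")
      case True
      then have "x \<ge> 0" using a by simp
      then show ?thesis using True rect_inner[OF _ b] by simp
    qed simp
  qed
  also have "\<dots> = ennreal (psi (a + b))"
    using outer_FTC[OF a b] by (simp add: Ioi_atLeast_nn)
  finally show ?thesis .
qed

lemma half_Q1:
  "(\<integral>\<^sup>+p. f2 p * ennreal (psi (fst p)) \<partial>(lborel \<Otimes>\<^sub>M lborel)) = ennreal (1/2)"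
proof -
  have "(\<integral>\<^sup>+p. f2 p * ennreal (psi (fst p)) \<partial>(lborel \<Otimes>\<^sub>M lborel))
      = (\<integral>\<^sup>+x. \<integral>\<^sup>+y. f2 (x, y) * ennreal (psi x) \<partial>lborel \<partial>lborel)"
    by (rule lborel.nn_integral_fst[symmetric, where f = "\<lambda>p. f2 p * ennreal (psi (fst p))", simplified]) measurable
  also have "\<dots> = (\<integral>\<^sup>+x. (ennreal (psi x) * indicator {0<..} x) * (\<integral>\<^sup>+y. ennreal (d2 (x + y)) * indicator {0<..} y \<partial>lborel) \<partial>lborel)"
  proof (intro nn_integral_cong)
    fix x :: real
    have "(\<integral>\<^sup>+y. f2 (x, y) * ennreal (psi x) \<partial>lborel)
        = (\<integral>\<^sup>+y. (ennreal (psi x) * indicator {0<..} x) * (ennreal (d2 (x + y)) * indicator {0<..} y) \<partial>lborel)"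
      by (intro nn_integral_cong) (auto simp: f2_def indicator_def mult_ac)
    also have "\<dots> = (ennreal (psi x) * indicator {0<..} x) * (\<integral>\<^sup>+y. ennreal (d2 (x + y)) * indicator {0<..} y \<partial>lborel)"
      by (rule nn_integral_cmult) measurable
    finally show "(\<integral>\<^sup>+y. f2 (x, y) * ennreal (psi x) \<partial>lborel)
        = (ennreal (psi x) * indicator {0<..} x) * (\<integral>\<^sup>+y. ennreal (d2 (x + y)) * indicator {0<..} y \<partial>lborel)" .
  qed
  also have "\<dots> = (\<integral>\<^sup>+x. ennreal (psi x * - d1 x) * indicator {0<..} x \<partial>lborel)"
  proof (intro nn_integral_cong)
    fix x :: real
    show "(ennreal (psi x) * indicator {0<..} x) * (\<integral>\<^sup>+y. ennreal (d2 (x + y)) * indicator {0<..} y \<partial>lborel)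
       = ennreal (psi x * - d1 x) * indicator {0<..} x"
    proof (cases "x > 0")
      case True
      have "ennreal (psi x * - d1 x) = ennreal (psi x) * ennreal (- d1 x)"
        using d1_nonpos[of x] True psi_nonneg[of x] by (intro ennreal_mult) auto
      then show ?thesis using rect_inner[of x 0] True by simp
    qed simp
  qed
  also have "\<dots> = ennreal (1/2)" using half_FTC by (simp add: Ioi_atLeast_nn)
  finally show ?thesis .
qed

end

lemma nn_integral_shift:
  fixes h :: "real \<Rightarrow> ennreal"
  assumes [measurable]: "h \<in> borel_measurable borel"
  shows "(\<integral>\<^sup>+y. h (x + y) \<partial>lborel) = (\<integral>\<^sup>+t. h t \<partial>lborel)"
proof -
  have "(\<integral>\<^sup>+t. h t \<partial>lborel) = (\<integral>\<^sup>+t. h t \<partial>(distr lborel borel ((+) x)))"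
    by (simp add: lborel_distr_plus)
  also have "\<dots> = (\<integral>\<^sup>+y. h (x + y) \<partial>lborel)" by (rule nn_integral_distr) auto
  finally show ?thesis ..
qed

context ig begin

lemma half_Q2:
  "(\<integral>\<^sup>+p. f2 p * ennreal (psi (snd p)) \<partial>(lborel \<Otimes>\<^sub>M lborel)) = ennreal (1/2)"
proof -
  have "(\<integral>\<^sup>+p. f2 p * ennreal (psi (snd p)) \<partial>(lborel \<Otimes>\<^sub>M lborel))
      = (\<integral>\<^sup>+y. \<integral>\<^sup>+x. f2 (x, y) * ennreal (psi y) \<partial>lborel \<partial>lborel)"
    by (rule lborel_pair.nn_integral_snd[symmetric, where f = "\<lambda>p. f2 p * ennreal (psi (snd p))", simplified]) measurable
  also have "\<dots> = (\<integral>\<^sup>+y. (ennreal (psi y) * indicator {0<..} y) * (\<integral>\<^sup>+x. ennreal (d2 (y + x)) * indicator {0<..} x \<partial>lborel) \<partial>lborel)"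
  proof (intro nn_integral_cong)
    fix y :: real
    have "(\<integral>\<^sup>+x. f2 (x, y) * ennreal (psi y) \<partial>lborel)
        = (\<integral>\<^sup>+x. (ennreal (psi y) * indicator {0<..} y) * (ennreal (d2 (y + x)) * indicator {0<..} x) \<partial>lborel)"
      by (intro nn_integral_cong) (auto simp: f2_def indicator_def mult_ac add.commute)
    also have "\<dots> = (ennreal (psi y) * indicator {0<..} y) * (\<integral>\<^sup>+x. ennreal (d2 (y + x)) * indicator {0<..} x \<partial>lborel)"
      by (rule nn_integral_cmult) measurable
    finally show "(\<integral>\<^sup>+x. f2 (x, y) * ennreal (psi y) \<partial>lborel)
        = (ennreal (psi y) * indicator {0<..} y) * (\<integral>\<^sup>+x. ennreal (d2 (y + x)) * indicator {0<..} x \<partial>lborel)" .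
  qed
  also have "\<dots> = (\<integral>\<^sup>+x. ennreal (psi x * - d1 x) * indicator {0<..} x \<partial>lborel)"
  proof (intro nn_integral_cong)
    fix x :: real
    show "(ennreal (psi x) * indicator {0<..} x) * (\<integral>\<^sup>+y. ennreal (d2 (x + y)) * indicator {0<..} y \<partial>lborel)
       = ennreal (psi x * - d1 x) * indicator {0<..} x"
    proof (cases "x > 0")
      case True
      have "ennreal (psi x * - d1 x) = ennreal (psi x) * ennreal (- d1 x)"
        using d1_nonpos[of x] True psi_nonneg[of x] by (intro ennreal_mult) auto
      then show ?thesis using rect_inner[of x 0] True by simp
    qed simp
  qed
  also have "\<dots> = ennreal (1/2)" using half_FTC by (simp add: Ioi_atLeast_nn)
  finally show ?thesis .
qed

lemma J_Q:
  "(\<integral>\<^sup>+p. f2 p * ennreal (psi (fst p + snd p)) \<partial>(lborel \<Otimes>\<^sub>M lborel))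
     = (\<integral>\<^sup>+t. ennreal (t * (psi t * d2 t)) * indicator {0..} t \<partial>lborel)"
proof -
  have "(\<integral>\<^sup>+p. f2 p * ennreal (psi (fst p + snd p)) \<partial>(lborel \<Otimes>\<^sub>M lborel))
      = (\<integral>\<^sup>+x. \<integral>\<^sup>+y. f2 (x, y) * ennreal (psi (x + y)) \<partial>lborel \<partial>lborel)"
    by (rule lborel.nn_integral_fst[symmetric, where f = "\<lambda>p. f2 p * ennreal (psi (fst p + snd p))", simplified]) measurable
  also have "\<dots> = (\<integral>\<^sup>+x. \<integral>\<^sup>+t. indicator {0<..} x * of_bool (x < t) * ennreal (d2 t * psi t) \<partial>lborel \<partial>lborel)"
  proof (rule nn_integral_cong)
    fix x :: real
    have "(\<integral>\<^sup>+y. f2 (x, y) * ennreal (psi (x + y)) \<partial>lborel)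
        = (\<integral>\<^sup>+y. (\<lambda>t. indicator {0<..} x * of_bool (x < t) * ennreal (d2 t * psi t)) (x + y) \<partial>lborel)"
    proof (intro nn_integral_cong)
      fix y :: real
      have "ennreal (d2 (x + y) * psi (x + y)) = ennreal (d2 (x + y)) * ennreal (psi (x + y))"
        using psi_nonneg by (intro ennreal_mult'') auto
      then show "f2 (x, y) * ennreal (psi (x + y)) = (\<lambda>t. indicator {0<..} x * of_bool (x < t) * ennreal (d2 t * psi t)) (x + y)"
        by (auto simp: f2_def  indicator_def)
    qed
    also have "\<dots> = (\<integral>\<^sup>+t. indicator {0<..} x * of_bool (x < t) * ennreal (d2 t * psi t) \<partial>lborel)"
      by (rule nn_integral_shift) measurable
    finally show "(\<integral>\<^sup>+y. f2 (x, y) * ennreal (psi (x + y)) \<partial>lborel)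
        = (\<integral>\<^sup>+t. indicator {0<..} x * of_bool (x < t) * ennreal (d2 t * psi t) \<partial>lborel)" .
  qed
  also have "\<dots> = (\<integral>\<^sup>+t. \<integral>\<^sup>+x. indicator {0<..} x * of_bool (x < t) * ennreal (d2 t * psi t) \<partial>lborel \<partial>lborel)"
    by (rule lborel_pair.Fubini'[symmetric]) measurable
  also have "\<dots> = (\<integral>\<^sup>+t. ennreal (t * (psi t * d2 t)) * indicator {0..} t \<partial>lborel)"
  proof (rule nn_integral_cong)
    fix t :: real
    have "(\<integral>\<^sup>+x. indicator {0<..} x * of_bool (x < t) * ennreal (d2 t * psi t) \<partial>lborel)
        = (\<integral>\<^sup>+x. ennreal (d2 t * psi t) * indicator {0<..<t} x \<partial>lborel)"
      by (intro nn_integral_cong) (auto simp: indicator_def)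
    also have "\<dots> = ennreal (d2 t * psi t) * emeasure lborel {0<..<t}" by (rule nn_integral_cmult_indicator) simp
    also have "\<dots> = ennreal (t * (psi t * d2 t)) * indicator {0..} t"
    proof (cases "t > 0")
      case True
      have "ennreal (t * (psi t * d2 t)) = ennreal (d2 t * psi t) * ennreal t"
        using True psi_nonneg[of t] d2_nonneg[of t]
        by (subst ennreal_mult[symmetric]) (auto simp: mult_ac)
      then show ?thesis using True by (simp add: )
    next
      case False
      then have "{0<..<t} = {}" by auto
      then show ?thesis using False by (cases "t = 0") (auto simp: indicator_def)
    qed
    finally show "(\<integral>\<^sup>+x. indicator {0<..} x * of_bool (x < t) * ennreal (d2 t * psi t) \<partial>lborel)
        = ennreal (t * (psi t * d2 t)) * indicator {0..} t" .
  qed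
  finally show ?thesis .
qed

end

theorem lemma3:
  fixes M :: "'a measure" and X :: "nat \<Rightarrow> 'a \<Rightarrow> real"
    and n :: nat and lam mu :: real and i j :: nat
  assumes "prob_space M"
    and "n \<ge> 2" and "lam > 0" and "mu > 0"
    and "\<And>k. k < n \<Longrightarrow> X k \<in> borel_measurable M"
    and "\<And>x :: nat \<Rightarrow> real. (\<forall>k<n. x k \<ge> 0) \<Longrightarrow>
           measure M {\<omega> \<in> space M. \<forall>k<n. X k \<omega> > x k}
             = exp (- (lam / mu) * (sqrt (1 + (2 * mu\<^sup>2 / lam) * (\<Sum>k<n. x k)) - 1))"
    and "i < n" and "j < n" and "i \<noteq> j"
  shows "kendall_tau M (X i) (X j)
           = 1 - ((mu / lam) * (2 + mu / lam) - 4 * exp (2 / (mu / lam)) * upper_gamma0 (2 / (mu / lam)))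
                 / (2 * (mu / lam)\<^sup>2)"
proof -
  interpret ig lam mu using assms(3,4) by unfold_locales
  interpret M: prob_space M by fact
  have Xm[measurable]: "X k \<in> borel_measurable M" if "k < n" for k using assms(5) that by simp
  have Xi[measurable]: "X i \<in> borel_measurable M" using assms(7) by (rule Xm)
  have Xj[measurable]: "X j \<in> borel_measurable M" using assms(8) by (rule Xm)
  define Z where "Z = (\<lambda>\<omega>. (X i \<omega>, X j \<omega>))"
  have Zm[measurable]: "Z \<in> M \<rightarrow>\<^sub>M borel"
    unfolding Z_def borel_prod[symmetric] by measurable
  define P where "P = distr M borel Z"
  interpret P: prob_space P unfolding P_def by (rule M.prob_space_distr) (rule Zm)
  have sets_P: "sets P = sets (borel :: (real \<times> real) measure)" by (simp add: P_def)
  have sets_P2[measurable_cong]: "sets P = sets (borel \<Otimes>\<^sub>M borel :: (real \<times> real) measure)"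
    unfolding borel_prod by (simp add: P_def)
  have space_P: "space P = UNIV" by (simp add: P_def)
  have rect_sets[measurable]: "{a<..} \<times> {b<..} \<in> sets (borel :: (real \<times> real) measure)" for a b :: real
    by (intro borel_open open_Times) auto
  have hyp: "measure M {\<omega> \<in> space M. \<forall>k<n. X k \<omega> > x k} = psi (\<Sum>k<n. x k)" if "\<forall>k<n. x k \<ge> 0" for x
    using assms(6)[OF that] by (simp add: psi_def sq_def k_def)
  have "measure M {\<omega> \<in> space M. \<forall>k<n. X k \<omega> > 0} = 1"
    using hyp[of "\<lambda>_. 0"] by (simp add: psi0)
  then have AEpos: "AE \<omega> in M. \<forall>k<n. X k \<omega> > 0"
    by (auto dest: M.AE_prob_1)
  have rectP: "measure P ({a<..} \<times> {b<..}) = psi (max a 0 + max b 0)" for a b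
  proof -
    define z where "z = (\<lambda>k. (if k = i then max a 0 else 0) + (if k = j then max b 0 else (0::real)))"
    have z_nn: "\<forall>k<n. z k \<ge> 0" by (simp add: z_def)
    have sumz: "(\<Sum>k<n. z k) = max a 0 + max b 0"
      unfolding z_def sum.distrib using assms(7,8) by simp
    have "measure P ({a<..} \<times> {b<..}) = measure M (Z -` ({a<..} \<times> {b<..}) \<inter> space M)"
      unfolding P_def by (rule measure_distr) (auto simp: Zm)
    also have "\<dots> = measure M {\<omega> \<in> space M. \<forall>k<n. X k \<omega> > z k}"
    proof (rule measure_eq_AE)
      show "AE \<omega> in M. (\<omega> \<in> Z -` ({a<..} \<times> {b<..}) \<inter> space M) = (\<omega> \<in> {\<omega> \<in> space M. \<forall>k<n. X k \<omega> > z k})"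
        using AEpos
      proof eventually_elim
        case (elim \<omega>)
        then show ?case using assms(7,8,9) unfolding z_def Z_def
          by (auto simp: max_def)
      qed
    qed (auto simp: Z_def)
    also have "\<dots> = psi (max a 0 + max b 0)" using hyp[OF z_nn] sumz by simp
    finally show ?thesis .
  qed
  have AEposP: "AE p in P. fst p > 0 \<and> snd p > 0"
  proof -
    have "measure P ({0<..} \<times> {0<..}) = 1" using rectP[of 0 0] by (simp add: psi0)
    then have "AE p in P. p \<in> {0<..} \<times> {0<..}" by (rule P.AE_prob_1)
    then show ?thesis by (auto elim: AE_mp)
  qed
  define Q where "Q = density (lborel \<Otimes>\<^sub>M lborel) f2"
  have sets_Q: "sets Q = sets (borel \<Otimes>\<^sub>M borel :: (real \<times> real) measure)"
    unfolding Q_def by simp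
  define E where "E = {a \<times> b | a b. a \<in> range (greaterThan :: real \<Rightarrow> real set) \<and> b \<in> range (greaterThan :: real \<Rightarrow> real set)}"
  have sigE: "sets (borel \<Otimes>\<^sub>M borel :: (real \<times> real) measure) = sigma_sets UNIV E"
  proof -
    have "sets (borel \<Otimes>\<^sub>M borel :: (real \<times> real) measure) = sets (sigma (space borel \<times> space borel) E)"
      unfolding E_def
    proof (rule sets_pair_eq[where Ca = "range (\<lambda>n::nat. {- real n<..})" and Cb = "range (\<lambda>n::nat. {- real n<..})"])
      show "sets (borel :: real measure) = sigma_sets (space borel) (range greaterThan)"
        by (subst borel_Ioi) simp
      show "sets (borel :: real measure) = sigma_sets (space borel) (range greaterThan)"
        by (subst borel_Ioi) simp
      have "x \<in> (\<Union>n. {- real n<..})" for x :: real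
      proof -
        obtain m :: nat where "- x < real m" using reals_Archimedean2 by blast
        then have "- real m < x" by simp
        then show ?thesis by blast
      qed
      then have U: "\<Union> (range (\<lambda>n::nat. {- real n<..})) = space borel" by auto
      show "\<Union> (range (\<lambda>n::nat. {- real n<..})) = space borel" by (rule U)
      show "\<Union> (range (\<lambda>n::nat. {- real n<..})) = space borel" by (rule U)
    qed auto
    then show ?thesis by simp
  qed
  have PQ: "P = Q"
  proof (rule measure_eqI_generator_eq[where E = E and \<Omega> = UNIV and A = "\<lambda>n. {- real n<..} \<times> {- real n<..}"])
    show "Int_stable E" unfolding E_def Int_stable_def
    proof (safe)
      fix a b c d :: real
      have "{a<..} \<times> {b<..} \<inter> {c<..} \<times> {d<..} = {max a c<..} \<times> {max b d<..}" by auto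
      then show "\<exists>aa ba. {a<..} \<times> {b<..} \<inter> {c<..} \<times> {d<..} = aa \<times> ba \<and> aa \<in> range greaterThan \<and> ba \<in> range greaterThan"
        by blast
    qed
    show "E \<subseteq> Pow UNIV" by simp
    show "sets P = sigma_sets UNIV E" using sets_P sigE borel_prod by metis
    show "sets Q = sigma_sets UNIV E" using sets_Q sigE by simp
    show "range (\<lambda>n. {- real n<..} \<times> {- real n<..}) \<subseteq> E" unfolding E_def by blast
    show "(\<Union>n. {- real n<..} \<times> {- real n<..}) = UNIV"
    proof -
      have "x \<in> (\<Union>n. {- real n<..} \<times> {- real n<..})" for x :: "real \<times> real"
      proof -
        obtain m :: nat where "max (- fst x) (- snd x) < real m" using reals_Archimedean2 by blast
        then have "- real m < fst x" "- real m < snd x" by auto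
        then show ?thesis by (cases x) auto
      qed
      then show ?thesis by auto
    qed
    show "emeasure P ({- real n<..} \<times> {- real n<..}) \<noteq> \<infinity>" for n by simp
    fix Y assume "Y \<in> E"
    then obtain a b where Y: "Y = {a<..} \<times> {b<..}" unfolding E_def by auto
    have "emeasure P Y = ennreal (psi (max a 0 + max b 0))"
      using rectP[of a b] by (simp add: Y P.emeasure_eq_measure)
    also have "\<dots> = (\<integral>\<^sup>+p. f2 p * indicator ({max a 0<..} \<times> {max b 0<..}) p \<partial>(lborel \<Otimes>\<^sub>M lborel))"
      by (rule rect_Q[symmetric]) auto
    also have "\<dots> = (\<integral>\<^sup>+p. f2 p * indicator Y p \<partial>(lborel \<Otimes>\<^sub>M lborel))"
      by (intro nn_integral_cong) (auto simp: Y f2_def indicator_def)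
    also have "\<dots> = emeasure Q Y"
      unfolding Q_def by (rule emeasure_density[symmetric]) (auto simp: Y)
    finally show "emeasure P Y = emeasure Q Y" .
  qed
  have psi_le1: "psi t \<le> 1" if "t \<ge> 0" for t
    using sq_ge1[OF that] lam mu by (simp add: psi_def)
  have nnP: "(\<integral>\<^sup>+p. ennreal (g p) \<partial>P) = (\<integral>\<^sup>+p. f2 p * ennreal (g p) \<partial>(lborel \<Otimes>\<^sub>M lborel))"
    if [measurable]: "g \<in> borel_measurable (borel \<Otimes>\<^sub>M borel)" for g :: "real \<times> real \<Rightarrow> real"
    unfolding PQ Q_def by (rule nn_integral_density) measurable
  have intP: "integral\<^sup>L P g = enn2real (\<integral>\<^sup>+p. f2 p * ennreal (g p) \<partial>(lborel \<Otimes>\<^sub>M lborel))"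
    if [measurable]: "g \<in> borel_measurable (borel \<Otimes>\<^sub>M borel)" and nn: "\<And>p. g p \<ge> 0" for g :: "real \<times> real \<Rightarrow> real"
  proof -
    have gP: "g \<in> borel_measurable P" using that(1) by (simp add: measurable_cong_sets[OF sets_P refl] borel_prod)
    show ?thesis
      using integral_eq_nn_integral[OF gP] nn nnP[OF that(1)] by simp
  qed
  have "integral\<^sup>L P (\<lambda>p. psi (fst p)) = enn2real (\<integral>\<^sup>+p. f2 p * ennreal (psi (fst p)) \<partial>(lborel \<Otimes>\<^sub>M lborel))"
    by (rule intP) (auto simp: psi_nonneg)
  also have "\<dots> = enn2real (ennreal (1/2))" by (simp only: half_Q1)
  also have "\<dots> = 1/2" by (rule enn2real_ennreal) simp
  finally have I1: "integral\<^sup>L P (\<lambda>p. psi (fst p)) = 1/2" .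
  have "integral\<^sup>L P (\<lambda>p. psi (snd p)) = enn2real (\<integral>\<^sup>+p. f2 p * ennreal (psi (snd p)) \<partial>(lborel \<Otimes>\<^sub>M lborel))"
    by (rule intP) (auto simp: psi_nonneg)
  also have "\<dots> = enn2real (ennreal (1/2))" by (simp only: half_Q2)
  also have "\<dots> = 1/2" by (rule enn2real_ennreal) simp
  finally have I2: "integral\<^sup>L P (\<lambda>p. psi (snd p)) = 1/2" .
  define Jv where "Jv = ((lam + mu) / w + lam / w^2 - mu + lam * exp w * upper_gamma0 w) / k"
  have Jv: "(\<integral>\<^sup>+t. ennreal (t * (psi t * d2 t)) * indicator {0..} t \<partial>lborel) = ennreal Jv" "Jv \<ge> 0"
    unfolding Jv_def using J_val by auto
  have "integral\<^sup>L P (\<lambda>p. psi (fst p + snd p)) = enn2real (\<integral>\<^sup>+p. f2 p * ennreal (psi (fst p + snd p)) \<partial>(lborel \<Otimes>\<^sub>M lborel))"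
    by (rule intP) (auto simp: psi_nonneg)
  also have "\<dots> = enn2real (ennreal Jv)" by (simp only: J_Q Jv(1))
  also have "\<dots> = Jv" using Jv(2) by (rule enn2real_ennreal)
  finally have I3: "integral\<^sup>L P (\<lambda>p. psi (fst p + snd p)) = Jv" .
  have nullfst: "AE q in P. fst q \<noteq> c" for c :: real
  proof -
    have N: "{c} \<times> (UNIV :: real set) \<in> null_sets (lborel \<Otimes>\<^sub>M lborel)"
      by (intro lborel.times_in_null_sets1) (auto simp: null_sets_def)
    have "emeasure P ({c} \<times> UNIV) = (\<integral>\<^sup>+p. f2 p * indicator ({c} \<times> UNIV) p \<partial>(lborel \<Otimes>\<^sub>M lborel))"
      unfolding PQ Q_def by (rule emeasure_density) (auto intro: N[THEN null_setsD2])
    also have "\<dots> = 0" using N by (rule nn_integral_null_set)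
    finally have "{c} \<times> UNIV \<in> null_sets P"
      using N[THEN null_setsD2] by (intro null_setsI) (auto simp: sets_P borel_prod[symmetric])
    then show ?thesis by (rule AE_I') (auto simp: space_P)
  qed
  have nullsnd: "AE q in P. snd q \<noteq> c" for c :: real
  proof -
    have N: "(UNIV :: real set) \<times> {c} \<in> null_sets (lborel \<Otimes>\<^sub>M lborel)"
      by (intro lborel.times_in_null_sets2) (auto simp: null_sets_def)
    have "emeasure P (UNIV \<times> {c}) = (\<integral>\<^sup>+p. f2 p * indicator (UNIV \<times> {c}) p \<partial>(lborel \<Otimes>\<^sub>M lborel))"
      unfolding PQ Q_def by (rule emeasure_density) (auto intro: N[THEN null_setsD2])
    also have "\<dots> = 0" using N by (rule nn_integral_null_set)
    finally have "UNIV \<times> {c} \<in> null_sets P"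
      using N[THEN null_setsD2] by (intro null_setsI) (auto simp: sets_P borel_prod[symmetric])
    then show ?thesis by (rule AE_I') (auto simp: space_P)
  qed
  have sets_open: "A \<in> sets P" if "open A" for A using that by (simp add: sets_P)
  have measA1: "measure P ({a<..} \<times> UNIV) = psi a" if "a > 0" for a
  proof -
    have "measure P ({a<..} \<times> UNIV) = measure P ({a<..} \<times> {0<..})"
      by (rule measure_eq_AE) (use AEposP in \<open>auto elim!: AE_mp intro!: sets_open open_Times\<close>)
    then show ?thesis using rectP[of a 0] that by simp
  qed
  have measA2: "measure P (UNIV \<times> {b<..}) = psi b" if "b > 0" for b
  proof -
    have "measure P (UNIV \<times> {b<..}) = measure P ({0<..} \<times> {b<..})"
      by (rule measure_eq_AE) (use AEposP in \<open>auto elim!: AE_mp intro!: sets_open open_Times\<close>)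
    then show ?thesis using rectP[of 0 b] that by simp
  qed
  define C where "C = {(p, q). (fst p - fst q) * (snd p - snd q) > (0::real)}"
  define D where "D = {(p, q). (fst p - fst q) * (snd p - snd q) < (0::real)}"
  have tau: "kendall_tau M (X i) (X j) = measure (P \<Otimes>\<^sub>M P) C - measure (P \<Otimes>\<^sub>M P) D"
    unfolding kendall_tau_def P_def Z_def C_def D_def Let_def by simp
  interpret PP: pair_prob_space P P ..
  have C_sets[measurable]: "C \<in> sets (P \<Otimes>\<^sub>M P)"
  proof -
    have "C = {x \<in> space (P \<Otimes>\<^sub>M P). 0 < (fst (fst x) - fst (snd x)) * (snd (fst x) - snd (snd x))}"
      by (auto simp: C_def space_pair_measure space_P)
    also have "\<dots> \<in> sets (P \<Otimes>\<^sub>M P)" by measurable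
    finally show ?thesis .
  qed
  have D_sets[measurable]: "D \<in> sets (P \<Otimes>\<^sub>M P)"
  proof -
    have "D = {x \<in> space (P \<Otimes>\<^sub>M P). (fst (fst x) - fst (snd x)) * (snd (fst x) - snd (snd x)) < 0}"
      by (auto simp: D_def space_pair_measure space_P)
    also have "\<dots> \<in> sets (P \<Otimes>\<^sub>M P)" by measurable
    finally show ?thesis .
  qed
  have "measure (P \<Otimes>\<^sub>M P) C - measure (P \<Otimes>\<^sub>M P) D
      = integral\<^sup>L (P \<Otimes>\<^sub>M P) (\<lambda>x. indicator C x - indicator D x :: real)"
  proof -
    have iC: "integrable (P \<Otimes>\<^sub>M P) (indicator C :: _ \<Rightarrow> real)"
      using C_sets by (intro integrable_real_indicator) (auto simp: less_top[symmetric])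
    have iD: "integrable (P \<Otimes>\<^sub>M P) (indicator D :: _ \<Rightarrow> real)"
      using D_sets by (intro integrable_real_indicator) (auto simp: less_top[symmetric])
    show ?thesis using C_sets D_sets
      by (simp add: Bochner_Integration.integral_diff[OF iC iD] Int_absorb2 sets.sets_into_space)
  qed
  also have "\<dots> = (\<integral>p. (\<integral>q. indicator C (p, q) - indicator D (p, q) \<partial>P) \<partial>P)"
    by (rule PP.integral_fst'[symmetric, where f = "\<lambda>x. indicator C x - indicator D x :: real", simplified])
       (use C_sets D_sets in \<open>auto simp: less_top[symmetric]\<close>)
  also have "\<dots> = (\<integral>p. 1 - 2 * psi (fst p) - 2 * psi (snd p) + 4 * psi (fst p + snd p) \<partial>P)"
  proof (rule integral_cong_AE)
    show "AE p in P. (\<integral>q. indicator C (p, q) - indicator D (p, q) \<partial>P)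
        = 1 - 2 * psi (fst p) - 2 * psi (snd p) + 4 * psi (fst p + snd p)"
      using AEposP
    proof eventually_elim
      case (elim p)
      define a where "a = fst p"
      define b where "b = snd p"
      have a: "a > 0" and b: "b > 0" using elim by (auto simp: a_def b_def)
      have mC: "(\<lambda>q. indicator C (p, q) :: real) \<in> borel_measurable P"
        by (rule measurable_compose[OF measurable_Pair1'[of p P P]])
           (auto simp: space_P intro!: borel_measurable_indicator C_sets)
      have mD: "(\<lambda>q. indicator D (p, q) :: real) \<in> borel_measurable P"
        by (rule measurable_compose[OF measurable_Pair1'[of p P P]])
           (auto simp: space_P intro!: borel_measurable_indicator D_sets)
      let ?A1 = "{a<..} \<times> (UNIV :: real set)"
      let ?A2 = "(UNIV :: real set) \<times> {b<..}"
      let ?A12 = "{a<..} \<times> {b<..}"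
      have sA1[measurable]: "?A1 \<in> sets P" by (intro sets_open open_Times) auto
      have sA2[measurable]: "?A2 \<in> sets P" by (intro sets_open open_Times) auto
      have sA12[measurable]: "?A12 \<in> sets P" by (intro sets_open open_Times) auto
      have iA1: "integrable P (indicator ?A1 :: _ \<Rightarrow> real)"
        by (intro integrable_real_indicator sA1) (auto simp: less_top[symmetric])
      have iA2: "integrable P (indicator ?A2 :: _ \<Rightarrow> real)"
        by (intro integrable_real_indicator sA2) (auto simp: less_top[symmetric])
      have iA12: "integrable P (indicator ?A12 :: _ \<Rightarrow> real)"
        by (intro integrable_real_indicator sA12) (auto simp: less_top[symmetric])
      have "(\<integral>q. indicator C (p, q) - indicator D (p, q) \<partial>P)
          = (\<integral>q. (1 - 2 * indicator ?A1 q - 2 * indicator ?A2 q + 4 * indicator ?A12 q :: real) \<partial>P)"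
      proof (rule integral_cong_AE)
        show "AE q in P. indicator C (p, q) - indicator D (p, q)
            = (1 - 2 * indicator ?A1 q - 2 * indicator ?A2 q + 4 * indicator ?A12 q :: real)"
          using nullfst[of a] nullsnd[of b]
        proof eventually_elim
          case (elim q)
          then show ?case
            by (cases "fst q < a"; cases "snd q < b")
               (auto simp: C_def D_def indicator_def a_def b_def zero_less_mult_iff mult_less_0_iff mem_Times_iff)
        qed
      qed (auto intro!: mC mD borel_measurable_add borel_measurable_diff borel_measurable_times
             borel_measurable_indicator sA1 sA2 sA12)
      also have "\<dots> = (\<integral>q. (1 - 2 * indicator ?A1 q - 2 * indicator ?A2 q :: real) \<partial>P) + (\<integral>q. (4 * indicator ?A12 q :: real) \<partial>P)"
        by (rule Bochner_Integration.integral_add)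
           (auto intro!: Bochner_Integration.integrable_diff integrable_mult_right iA1 iA2 iA12)
      also have "(\<integral>q. (1 - 2 * indicator ?A1 q - 2 * indicator ?A2 q :: real) \<partial>P)
          = (\<integral>q. (1 - 2 * indicator ?A1 q :: real) \<partial>P) - (\<integral>q. (2 * indicator ?A2 q :: real) \<partial>P)"
        by (rule Bochner_Integration.integral_diff)
           (auto intro!: Bochner_Integration.integrable_diff integrable_mult_right iA1 iA2 iA12)
      also have "(\<integral>q. (1 - 2 * indicator ?A1 q :: real) \<partial>P) = (\<integral>q. (1::real) \<partial>P) - (\<integral>q. (2 * indicator ?A1 q :: real) \<partial>P)"
        by (rule Bochner_Integration.integral_diff)
           (auto intro!: integrable_mult_right iA1)
      also have "(\<integral>q. (2 * indicator ?A1 q :: real) \<partial>P) = 2 * measure P ?A1"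
        using sA1 by (simp add: space_P)
      also have "(\<integral>q. (2 * indicator ?A2 q :: real) \<partial>P) = 2 * measure P ?A2"
        using sA2 by (simp add: space_P)
      also have "(\<integral>q. (4 * indicator ?A12 q :: real) \<partial>P) = 4 * measure P ?A12"
        using sA12 by (simp add: space_P)
      also have "(\<integral>q. (1::real) \<partial>P) = 1" by (simp add: P.prob_space)
      finally show ?case
        using measA1[OF a] measA2[OF b] rectP[of a b] a b by (simp add: a_def b_def)
    qed
  qed measurable
  also have "\<dots> = 4 * Jv - 1"
  proof -
    have bnd: "AE p in P. norm (psi (fst p)) \<le> 1 \<and> norm (psi (snd p)) \<le> 1 \<and> norm (psi (fst p + snd p)) \<le> 1"
      using AEposP by eventually_elim (auto simp: psi_nonneg intro!: psi_le1)
    have i1: "integrable P (\<lambda>p. psi (fst p))"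
      by (rule P.integrable_const_bound[where B=1]) (use bnd in \<open>auto elim: AE_mp\<close>)
    have i2: "integrable P (\<lambda>p. psi (snd p))"
      by (rule P.integrable_const_bound[where B=1]) (use bnd in \<open>auto elim: AE_mp\<close>)
    have i3: "integrable P (\<lambda>p. psi (fst p + snd p))"
      by (rule P.integrable_const_bound[where B=1]) (use bnd in \<open>auto elim: AE_mp\<close>)
    have "(\<integral>p. 1 - 2 * psi (fst p) - 2 * psi (snd p) + 4 * psi (fst p + snd p) \<partial>P)
        = (\<integral>p. 1 - 2 * psi (fst p) - 2 * psi (snd p) \<partial>P) + (\<integral>p. 4 * psi (fst p + snd p) \<partial>P)"
      by (rule Bochner_Integration.integral_add)
         (auto intro!: Bochner_Integration.integrable_diff integrable_mult_right i1 i2 i3)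
    also have "(\<integral>p. 1 - 2 * psi (fst p) - 2 * psi (snd p) \<partial>P)
        = (\<integral>p. 1 - 2 * psi (fst p) \<partial>P) - (\<integral>p. 2 * psi (snd p) \<partial>P)"
      by (rule Bochner_Integration.integral_diff)
         (auto intro!: Bochner_Integration.integrable_diff integrable_mult_right i1 i2 i3)
    also have "(\<integral>p. 1 - 2 * psi (fst p) \<partial>P) = (\<integral>p. 1 \<partial>P) - (\<integral>p. 2 * psi (fst p) \<partial>P)"
      by (rule Bochner_Integration.integral_diff)
         (auto intro!: integrable_mult_right i1)
    also have "(\<integral>p. 2 * psi (fst p) \<partial>P) = 2 * (1/2)" using I1 by simp
    also have "(\<integral>p. 2 * psi (snd p) \<partial>P) = 2 * (1/2)" using I2 by simp
    also have "(\<integral>p. 4 * psi (fst p + snd p) \<partial>P) = 4 * Jv" using I3 by simp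
    also have "(\<integral>p. (1::real) \<partial>P) = 1" by (simp add: P.prob_space)
    finally show ?thesis by simp
  qed
  finally have tau2: "kendall_tau M (X i) (X j) = 4 * Jv - 1" using tau by simp
  have w2: "2 / (mu / lam) = w" by (simp add: w_def)
  define G where "G = upper_gamma0 w"
  show ?thesis
    unfolding tau2 w2 Jv_def G_def[symmetric] using lam mu
    by (simp add: w_def k_def field_simps power2_eq_square)
qed

end
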